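(* Let $P\subset\mathbb R^2$ be an $\mathbb R$-$\Delta_2$-free polygon and $F$ a facet (edge) of $P$. Then $F$ is locked if and only if $P$ contains an $\mathbb R$-unimodular copy $\Delta$ of $\Delta_2$ such that the face $\mathcal F:=F\cap\Delta$ of $\Delta$ is nonempty and contained in the relative interior of $F$, and the face $\ell$ of $\Delta$ opposite to $\mathcal F$ (the convex hull of the vertices of $\Delta$ not in $\mathcal F$) satisfies $\dim(P\div\ell)=2$.
   Context: A polygon is a two-dimensional convex polytope in $\mathbb R^2$. $\Delta_2=\mathrm{conv}(\mathbf 0,e_1,e_2)$. An $\mathbb R$-unimodular copy of $X$ is $T(X)$ where $T(x)=Mx+b$, $M\in\mathrm{GL}_2(\mathbb Z)$, $b\in\mathbb R^2$. A convex set is $\mathbb R$-$\Delta_2$-free if its relative interior contains no $\mathbb R$-unimodular copy of $\Delta_2$. A point is beyond a facet $F$ of $P$ if it lies in the open half-plane bounded by the line spanned by $F$ not containing $\mathrm{int}(P)$. A facet $F$ of an $\mathbb R$-$\Delta_2$-free polygon $P$ is locked if for every $x\in\mathbb R^2$ beyond $F$, the interior of $\mathrm{conv}(P\cup\{x\})$ contains an $\mathbb R$-unimodular copy of $\Delta_2$. Minkowski difference: $A\div B=\{x: B+x\subset A\}$; dimension of a convex set is that of its affine hull. *)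

theory Defs
  imports "HOL-Analysis.Analysis"
begin

definition polygon :: "(real^2) set \<Rightarrow> bool" where
  "polygon P \<longleftrightarrow> polytope P \<and> aff_dim P = 2"

definition Delta2 :: "(real^2) set" where
  "Delta2 = convex hull {0, axis 1 1, axis 2 1}"

definition R_unimodular_map :: "(real^2 \<Rightarrow> real^2) \<Rightarrow> bool" where
  "R_unimodular_map T \<longleftrightarrow>
     (\<exists>(M::real^2^2) b. (\<forall>i j. M$i$j \<in> \<int>) \<and> \<bar>det M\<bar> = 1 \<and> T = (\<lambda>x. M *v x + b))"

definition R_unimodular_copy :: "(real^2) set \<Rightarrow> (real^2) set \<Rightarrow> bool" where
  "R_unimodular_copy X Y \<longleftrightarrow> (\<exists>T. R_unimodular_map T \<and> Y = T ` X)"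

definition R_Delta2_free :: "(real^2) set \<Rightarrow> bool" where
  "R_Delta2_free C \<longleftrightarrow> convex C \<and>
     \<not> (\<exists>D. R_unimodular_copy Delta2 D \<and> D \<subseteq> rel_interior C)"

definition beyond :: "(real^2) set \<Rightarrow> (real^2) set \<Rightarrow> real^2 \<Rightarrow> bool" where
  "beyond F P x \<longleftrightarrow>
     (\<exists>a b. a \<noteq> 0 \<and> affine hull F = {y. a \<bullet> y = b} \<and>
            interior P \<subseteq> {y. a \<bullet> y < b} \<and> a \<bullet> x > b)"

definition locked :: "(real^2) set \<Rightarrow> (real^2) set \<Rightarrow> bool" where
  "locked F P \<longleftrightarrow> R_Delta2_free P \<and> polygon P \<and> F facet_of P \<and>
     (\<forall>x. beyond F P x \<longrightarrow>
        (\<exists>D. R_unimodular_copy Delta2 D \<and> D \<subseteq> interior (convex hull (insert x P))))"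

definition mink_diff :: "(real^2) set \<Rightarrow> (real^2) set \<Rightarrow> (real^2) set" where
  "mink_diff A B = {x. (\<lambda>y. y + x) ` B \<subseteq> A}"

end

theory Submission
  imports Defs
begin



lemma mat_axis: "((M::real^2^2) *v axis j 1) $ i = M $ i $ j"
  using exhaust_2[of j] by (auto simp: matrix_vector_mult_def axis_def sum_2)

lemma hull_transl: "(\<lambda>y. y + u) ` (convex hull S) = convex hull ((\<lambda>y. y + (u::'a::real_vector)) ` S)"
  using convex_hull_translation[of u S] by (simp add: add.commute)

lemma img_hull: "(\<lambda>y. (M::real^2^2) *v y + c) ` Delta2 = convex hull {c, M *v axis 1 1 + c, M *v axis 2 1 + c}"
proof -
  have lin: "linear (\<lambda>y. M *v y)" by (simp add: matrix_vector_mul_linear)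
  have "(\<lambda>y. M *v y + c) ` Delta2 = (\<lambda>y. y + c) ` ((\<lambda>y. M *v y) ` Delta2)" by (simp add: image_image)
  also have "(\<lambda>y. M *v y) ` Delta2 = convex hull ((\<lambda>y. M *v y) ` {0, axis 1 1, axis 2 1})"
    unfolding Delta2_def using convex_hull_linear_image[OF lin] by blast
  finally show ?thesis by (simp add: hull_transl)
qed

lemma par2:
  fixes a f u :: "real^2"
  assumes "a \<noteq> 0" "f \<noteq> 0" "a \<bullet> f = 0" "a \<bullet> u = 0"
  shows "u = ((u \<bullet> f) / (f \<bullet> f)) *\<^sub>R f"
proof -
  have a: "a$1 \<noteq> 0 \<or> a$2 \<noteq> 0" using assms(1) by (metis exhaust_2 vec_eq_iff zero_index)
  have f: "f$1 \<noteq> 0 \<or> f$2 \<noteq> 0" using assms(2) by (metis exhaust_2 vec_eq_iff zero_index)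
  have e1: "a$1 * f$1 + a$2 * f$2 = 0" using assms(3) by (simp add: inner_vec_def sum_2)
  have e2: "a$1 * u$1 + a$2 * u$2 = 0" using assms(4) by (simp add: inner_vec_def sum_2)
  have cr: "u$1 * f$2 = u$2 * f$1"
  proof (cases "a$1 = 0")
    case True
    then have "a$2 \<noteq> 0" using a by auto
    then have "f$2 = 0" "u$2 = 0" using e1 e2 True by auto
    then show ?thesis by simp
  next
    case False
    have "f$1 = - a$2 * f$2 / a$1" "u$1 = - a$2 * u$2 / a$1" using e1 e2 False by (auto simp: field_simps)
    then show ?thesis by (simp add: field_simps)
  qed
  have ff: "f \<bullet> f = f$1*f$1 + f$2*f$2" "u \<bullet> f = u$1*f$1 + u$2*f$2" by (simp_all add: inner_vec_def sum_2)
  have pos: "f$1*f$1 + f$2*f$2 \<noteq> 0" using f by (simp add: sum_squares_eq_zero_iff)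
  have c1: "u$1 = (u$1*f$1 + u$2*f$2) / (f$1*f$1 + f$2*f$2) * f$1"
    using pos cr by (simp add: field_simps)
  have c2: "u$2 = (u$1*f$1 + u$2*f$2) / (f$1*f$1 + f$2*f$2) * f$2"
    using pos cr by (simp add: field_simps)
  show ?thesis unfolding vec_eq_iff forall_2 ff using c1 c2 by simp
qed

lemma fin_mats: "finite S \<Longrightarrow> finite {M::real^2^2. \<forall>i j. M$i$j \<in> S}"
proof -
  assume S: "finite S"
  let ?g = "\<lambda>(p::real,q::real,r::real,s::real). (vector [vector [p,q], vector [r,s]] :: real^2^2)"
  have "{M::real^2^2. \<forall>i j. M$i$j \<in> S} \<subseteq> ?g ` (S \<times> S \<times> S \<times> S)"
  proof
    fix M :: "real^2^2" assume M: "M \<in> {M. \<forall>i j. M$i$j \<in> S}"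
    have "M = ?g (M$1$1, M$1$2, M$2$1, M$2$2)"
      by (simp add: vec_eq_iff forall_2 vector_2)
    then show "M \<in> ?g ` (S \<times> S \<times> S \<times> S)" using M by blast
  qed
  then show ?thesis by (rule finite_subset) (use S in auto)
qed




lemma capL:
  fixes P :: "(real^2) set"
  assumes cvx: "convex P" and sub: "P \<subseteq> {y. a \<bullet> y \<le> b}"
    and Fe: "P \<inter> {y. a \<bullet> y = b} = closed_segment e e'"
    and xb: "a \<bullet> x > b"
    and good: "\<forall>p\<in>P. \<forall>w\<in>closed_segment p x. a \<bullet> w = b \<longrightarrow> w \<in> P"
    and z: "z \<in> convex hull (insert x P)"
  shows "(a \<bullet> z \<le> b \<longrightarrow> z \<in> P) \<and> (b \<le> a \<bullet> z \<longrightarrow> z \<in> convex hull {e,e',x})"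
proof -
  have ne: "P \<noteq> {}" using Fe by auto
  obtain u v p where uv: "u \<ge> 0" "v \<ge> 0" "u + v = 1" and p: "p \<in> P" and zz: "z = u *\<^sub>R x + v *\<^sub>R p"
    using z unfolding convex_hull_insert[OF ne] convex_hull_eq[THEN iffD2, OF cvx] by blast
  have zp: "z = p + u *\<^sub>R (x - p)" using zz uv by (simp add: algebra_simps) (metis scaleR_add_left scaleR_one)
  have pb: "a \<bullet> p \<le> b" using p sub by auto
  have az: "a \<bullet> z = a \<bullet> p + u * (a \<bullet> x - a \<bullet> p)" using zp by (simp add: inner_simps)
  define mu where "mu = (b - a \<bullet> p) / (a \<bullet> x - a \<bullet> p)"
  have den: "a \<bullet> x - a \<bullet> p > 0" using pb xb by auto
  have mu0: "0 \<le> mu" "mu < 1" using den pb xb unfolding mu_def by (auto simp: field_simps)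
  define w where "w = p + mu *\<^sub>R (x - p)"
  have "mu * (a \<bullet> x - a \<bullet> p) = b - a \<bullet> p" unfolding mu_def using den by simp
  then have aw: "a \<bullet> w = b" unfolding w_def by (simp add: inner_simps algebra_simps)
  have wseg: "w \<in> closed_segment p x" unfolding in_segment w_def using mu0
    by (intro exI[of _ mu]) (auto simp: algebra_simps)
  have wP: "w \<in> P" using good p wseg aw by blast
  have wF: "w \<in> closed_segment e e'" using Fe wP aw by blast
  have hull3: "closed_segment e e' \<subseteq> convex hull {e,e',x}"
    unfolding segment_convex_hull by (rule hull_mono) auto
  have part1: "z \<in> P" if "a \<bullet> z \<le> b"
  proof (cases "u = 0")
    case True then show ?thesis using zp p by simp
  next
    case False
    have "u * (a \<bullet> x - a \<bullet> p) \<le> b - a \<bullet> p" using that az by simp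
    then have ule: "u \<le> mu" unfolding mu_def using den by (simp add: field_simps)
    then have mp: "mu > 0" using False uv by simp
    have "z = (1 - u/mu) *\<^sub>R p + (u/mu) *\<^sub>R w"
      unfolding zp w_def using mp by (simp add: algebra_simps)
    moreover have "0 \<le> u/mu" "u/mu \<le> 1" using ule mp uv by auto
    ultimately have "z \<in> closed_segment p w" unfolding in_segment by blast
    then show ?thesis using p wP cvx closed_segment_subset by blast
  qed
  have part2: "z \<in> convex hull {e,e',x}" if "b \<le> a \<bullet> z"
  proof -
    have "b - a \<bullet> p \<le> u * (a \<bullet> x - a \<bullet> p)" using that az by simp
    then have ule: "mu \<le> u" unfolding mu_def using den by (simp add: field_simps)
    define lam where "lam = (u - mu) / (1 - mu)"
    have l01: "0 \<le> lam" "lam \<le> 1" unfolding lam_def using ule mu0 uv by (auto simp: field_simps)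
    have "lam * (1 - mu) = u - mu" unfolding lam_def using mu0 by simp
    then have e1: "(1 - lam) * mu + lam = u" by (simp add: algebra_simps)
    have "(1 - lam) *\<^sub>R w + lam *\<^sub>R x = p + ((1 - lam) * mu + lam) *\<^sub>R (x - p)"
      unfolding w_def by (simp add: algebra_simps)
    then have "z = (1 - lam) *\<^sub>R w + lam *\<^sub>R x" using zp e1 by simp
    then have "z \<in> closed_segment w x" unfolding in_segment using l01 by blast
    moreover have "w \<in> convex hull {e,e',x}" using wF hull3 by blast
    moreover have "x \<in> convex hull {e,e',x}" by (simp add: hull_inc)
    ultimately show ?thesis using convex_convex_hull closed_segment_subset by blast
  qed
  show ?thesis using part1 part2 by blast
qed

lemma inner_midpoint: "a \<bullet> g = b \<Longrightarrow> a \<bullet> g' = b \<Longrightarrow> a \<bullet> midpoint g g' = (b::real)"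
  by (simp add: midpoint_def inner_simps)

lemma decomp:
  fixes g g' x z a :: "real^2"
  assumes z: "z \<in> convex hull {g, g', x}" and x: "x = midpoint g g' + s *\<^sub>R a"
    and g: "a \<bullet> g = b" "a \<bullet> g' = b" and az: "a \<bullet> z > b" and s: "s > 0"
  shows "\<exists>kk hh. z - g = kk *\<^sub>R (g' - g) + hh *\<^sub>R a \<and> kk > 0 \<and> 0 \<le> hh \<and> hh \<le> 2 * s * kk"
proof -
  obtain u v w where uvw: "0 \<le> u" "0 \<le> v" "0 \<le> w" "u + v + w = 1" and zz: "z = u *\<^sub>R g + v *\<^sub>R g' + w *\<^sub>R x"
    using z unfolding convex_hull_3 by blast
  have am: "a \<bullet> midpoint g g' = b" using g by (rule inner_midpoint)
  have "a \<bullet> z = u * b + v * b + w * (b + s * (a \<bullet> a))"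
    unfolding zz x using g am by (simp add: inner_simps)
  also have "\<dots> = (u + v + w) * b + w * s * (a \<bullet> a)" by (simp add: algebra_simps)
  also have "\<dots> = b + w * s * (a \<bullet> a)" using uvw(4) by simp
  finally have "w * s * (a \<bullet> a) > 0" using az by simp
  then have wp: "w > 0" using uvw(3) by (cases "w = 0") auto
  have "z - g = (v + w/2) *\<^sub>R (g' - g) + (w * s) *\<^sub>R a"
  proof -
    have u: "u = 1 - v - w" using uvw(4) by simp
    show ?thesis unfolding zz x u midpoint_def by (simp add: vec_eq_iff algebra_simps)
  qed
  moreover have "v + w/2 > 0" using wp uvw by simp
  moreover have "0 \<le> w * s" using wp s by simp
  moreover have "w * s \<le> 2 * s * (v + w/2)" using s uvw(2) by (simp add: algebra_simps)
  ultimately show ?thesis by blast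
qed

lemma lin3: "(c::real)/2 \<le> X \<Longrightarrow> y \<le> m/2 \<Longrightarrow> m \<le> c \<Longrightarrow> 0 \<le> X - y"
  by linarith

lemma seg_interior:
  fixes P :: "(real^2) set"
  assumes cvx: "convex P" and q: "q \<in> interior P" "a \<bullet> q < b"
    and e: "e \<in> P" "e' \<in> P" "a \<bullet> e = b" "a \<bullet> e' = b" "e \<noteq> e'"
    and x: "a \<bullet> x > b" and a: "a \<noteq> 0" and y: "y \<in> open_segment e e'"
  shows "y \<in> interior (convex hull (insert x P))"
proof -
  define f where "f = e' - e"
  have af: "a \<bullet> f = 0" unfolding f_def using e by (simp add: inner_simps)
  have f0: "f \<noteq> 0" unfolding f_def using e by simp
  obtain sig where s: "0 < sig" "sig < 1" and yy: "y = (1 - sig) *\<^sub>R e + sig *\<^sub>R e'"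
    using y unfolding in_segment by blast
  have ay: "a \<bullet> y = b" unfolding yy using e by (simp add: inner_simps algebra_simps)
  define w where "w = y - q"
  have aw: "a \<bullet> w > 0" unfolding w_def using ay q by (simp add: inner_simps)
  have axy: "a \<bullet> (x - y) > 0" using ay x by (simp add: inner_simps)
  define bet where "bet = (a \<bullet> w) / (a \<bullet> (x - y))"
  have bp: "bet > 0" unfolding bet_def using aw axy by simp
  define u0 where "u0 = w - bet *\<^sub>R (x - y)"
  have au0: "a \<bullet> u0 = 0" unfolding u0_def bet_def using axy by (simp add: inner_simps)
  define alp where "alp = (u0 \<bullet> f) / (f \<bullet> f)"
  have u0f: "u0 = alp *\<^sub>R f" unfolding alp_def using par2[OF a f0 af au0] .
  define m where "m = min sig (1 - sig)"
  have mp: "m > 0" "m \<le> sig" "m \<le> 1 - sig" unfolding m_def using s by auto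
  define mu where "mu = min (1 / (2*bet)) (m / (2 * (\<bar>alp\<bar> + 1)))"
  have mu: "mu > 0" unfolding mu_def using bp mp by auto
  have mub: "mu * bet \<le> 1/2"
  proof -
    have "mu \<le> 1 / (2*bet)" unfolding mu_def by simp
    then show ?thesis using bp by (simp add: field_simps)
  qed
  have mua: "mu * \<bar>alp\<bar> \<le> m / 2"
  proof -
    have "mu \<le> m / (2 * (\<bar>alp\<bar> + 1))" unfolding mu_def by simp
    then have "mu * (2 * (\<bar>alp\<bar> + 1)) \<le> m" by (simp add: field_simps)
    then show ?thesis using mu by (simp add: algebra_simps)
  qed
  define z where "z = y + mu *\<^sub>R w"
  define A where "A = (1 - mu*bet) * (1 - sig) - mu*alp"
  define B where "B = (1 - mu*bet) * sig + mu*alp"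
  define C where "C = mu*bet"
  have wdec: "w = alp *\<^sub>R f + bet *\<^sub>R (x - y)" using u0f unfolding u0_def by (simp add: algebra_simps)
  have zABC: "z = A *\<^sub>R e + B *\<^sub>R e' + C *\<^sub>R x"
    unfolding z_def wdec yy A_def B_def C_def f_def by (simp add: algebra_simps)
  have "mu * alp \<le> mu * \<bar>alp\<bar>" using mu by (intro mult_left_mono) auto
  moreover have "mu * (- alp) \<le> mu * \<bar>alp\<bar>" using mu by (intro mult_left_mono) auto
  ultimately have "mu * alp \<le> mu * \<bar>alp\<bar>" "- (mu * alp) \<le> mu * \<bar>alp\<bar>" by simp_all
  then have "mu * alp \<le> m/2" "- (mu * alp) \<le> m/2" using mua by linarith+
  note ma = this
  have h1: "(1 - mu*bet) * (1 - sig) \<ge> (1 - sig)/2"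
    using mub s by (intro order.trans[OF _ mult_right_mono[of "1/2" "1 - mu*bet" "1 - sig"]]) auto
  have h2: "(1 - mu*bet) * sig \<ge> sig/2"
    using mub s by (intro order.trans[OF _ mult_right_mono[of "1/2" "1 - mu*bet" sig]]) auto
  have ABC: "0 \<le> A" "0 \<le> B" "0 \<le> C" "A + B + C = 1"
  proof -
    show "0 \<le> A" unfolding A_def using lin3[OF h1 ma(1) mp(3)] .
    show "0 \<le> B" unfolding B_def using lin3[OF h2 _ mp(2), of "- (mu*alp)"] ma(2) by simp
    show "0 \<le> C" unfolding C_def using mu bp by simp
    show "A + B + C = 1" unfolding A_def B_def C_def by (simp add: algebra_simps)
  qed
  then have "z \<in> convex hull {e,e',x}" unfolding convex_hull_3 zABC by blast
  moreover have "convex hull {e,e',x} \<subseteq> convex hull (insert x P)" using e by (intro hull_mono) auto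
  ultimately have zC: "z \<in> convex hull (insert x P)" by blast
  have qC: "q \<in> interior (convex hull (insert x P))"
  proof -
    have "P \<subseteq> convex hull (insert x P)" by (meson hull_subset subset_insertI subset_trans)
    then show ?thesis using q(1) interior_mono by blast
  qed
  have "open_segment q z \<subseteq> interior (convex hull (insert x P))"
    by (rule in_interior_closure_convex_segment) (use qC zC closure_subset in auto)
  moreover have "y \<in> open_segment q z"
  proof -
    have az: "a \<bullet> z > b" unfolding z_def using ay aw mu by (simp add: inner_simps)
    then have "q \<noteq> z" using q by auto
    moreover have "y = (1 - 1/(1+mu)) *\<^sub>R q + (1/(1+mu)) *\<^sub>R z"
    proof -
      define t where "t = 1/(1+mu)"
      have c: "t + t * mu = 1" unfolding t_def using mu by (simp add: field_simps)
      have "(1 - t) *\<^sub>R q + t *\<^sub>R z = (1 - (t + t * mu)) *\<^sub>R q + (t + t * mu) *\<^sub>R y"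
        unfolding z_def w_def by (simp add: algebra_simps)
      also have "\<dots> = y" unfolding c by simp
      finally show ?thesis unfolding t_def by simp
    qed
    moreover have "0 < 1/(1+mu)" "1/(1+mu) < 1" using mu by auto
    ultimately show ?thesis unfolding in_segment by blast
  qed
  ultimately show ?thesis by blast
qed




lemma uniform_pos:
  assumes "finite E" "\<forall>v\<in>E. \<exists>r>0. Q v (r::real)" "\<And>v r r'. Q v r \<Longrightarrow> 0 < r' \<Longrightarrow> r' \<le> r \<Longrightarrow> Q v r'"
  shows "\<exists>r>0. \<forall>v\<in>E. Q v r"
  using assms(1,2)
proof (induction E rule: finite_induct)
  case empty then show ?case by (intro exI[of _ 1]) auto
next
  case (insert x E)
  then obtain r1 where r1: "r1 > 0" "\<forall>v\<in>E. Q v r1" by auto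
  obtain r2 where r2: "r2 > 0" "Q x r2" using insert.prems by auto
  show ?case using r1 r2 assms(3)
    by (intro exI[of _ "min r1 r2"]) (auto simp: min_le_iff_disj)
qed

lemma facet_setup:
  fixes P F :: "(real^2) set"
  assumes "polygon P" "F facet_of P"
  obtains a b e e' where "a \<noteq> 0" "P \<subseteq> {y. a \<bullet> y \<le> b}" "F = P \<inter> {y. a \<bullet> y = b}"
    "F = closed_segment e e'" "e \<noteq> e'" "affine hull F = {y. a \<bullet> y = b}"
proof -
  have pt: "polytope P" and ad: "aff_dim P = 2" using assms(1) unfolding polygon_def by auto
  obtain a b where ab: "a \<noteq> 0" "P \<subseteq> {y. a \<bullet> y \<le> b}" "F = P \<inter> {y. a \<bullet> y = b}"
    using facet_of_polyhedron[OF polytope_imp_polyhedron[OF pt] assms(2)] by blast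
  have fo: "F face_of P" "F \<noteq> {}" "aff_dim F = 1" using assms(2) ad unfolding facet_of_def by auto
  have ptF: "polytope F" using face_of_polytope_polytope[OF pt fo(1)] .
  have "collinear F" using fo(3) by (simp add: collinear_aff_dim)
  then obtain e e' where F: "F = closed_segment e e'"
    using compact_convex_collinear_segment[OF fo(2) polytope_imp_compact[OF ptF] polytope_imp_convex[OF ptF]] by blast
  have ee: "e \<noteq> e'" using F fo(3) by auto
  have sub: "F \<subseteq> {y. a \<bullet> y = b}" using ab by auto
  have "aff_dim F = aff_dim {y. a \<bullet> y = b}" using fo(3) ab(1) by simp
  then have "affine hull F = affine hull {y. a \<bullet> y = b}" using aff_dim_eq_full_gen[OF sub] by blast
  also have "\<dots> = {y. a \<bullet> y = b}" using hull_same[of affine, OF affine_hyperplane] by blast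
  finally show ?thesis using that ab F ee by blast
qed




lemma polygon_interior:
  fixes P :: "(real^2) set"
  assumes "polygon P"
  shows "interior P \<noteq> {}" "rel_interior P = interior P" "convex P" "compact P"
proof -
  have pt: "polytope P" and ad: "aff_dim P = 2" using assms unfolding polygon_def by auto
  show cv: "convex P" "compact P" using pt by (auto simp: polytope_imp_convex polytope_imp_compact)
  have "P \<noteq> {}" using ad by auto
  then have "rel_interior P \<noteq> {}" using cv rel_interior_eq_empty by blast
  moreover show "rel_interior P = interior P" using ad interior_rel_interior_gen[of P] by simp
  ultimately show "interior P \<noteq> {}" by simp
qed

lemma convex_mink_diff:
  fixes P :: "(real^2) set"
  assumes "convex P" shows "convex (mink_diff P L)"
proof (rule convexI)
  fix x y :: "real^2" and u v :: real
  assume xy: "x \<in> mink_diff P L" "y \<in> mink_diff P L" and uv: "0 \<le> u" "0 \<le> v" "u + v = 1"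
  show "u *\<^sub>R x + v *\<^sub>R y \<in> mink_diff P L" unfolding mink_diff_def
  proof (clarsimp)
    fix l assume l: "l \<in> L"
    have "l + (u *\<^sub>R x + v *\<^sub>R y) = (u + v) *\<^sub>R l + (u *\<^sub>R x + v *\<^sub>R y)" using uv by simp
    also have "\<dots> = u *\<^sub>R (l + x) + v *\<^sub>R (l + y)" by (simp add: algebra_simps)
    finally have eq: "l + (u *\<^sub>R x + v *\<^sub>R y) = u *\<^sub>R (l + x) + v *\<^sub>R (l + y)" .
    have "l + x \<in> P" "l + y \<in> P" using xy l unfolding mink_diff_def by auto
    then show "l + (u *\<^sub>R x + v *\<^sub>R y) \<in> P" unfolding eq using assms uv unfolding convex_def by simp
  qed
qed

lemma copy_translate:
  "(\<lambda>y. y + t) ` ((\<lambda>y. (M::real^2^2) *v y + c) ` Delta2) = (\<lambda>y. M *v y + (c + t)) ` Delta2"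
  by (simp add: image_image add.assoc)




lemma bwd:
  fixes P F D :: "(real^2) set"
  assumes pg: "polygon P" and free: "R_Delta2_free P" and fc: "F facet_of P"
    and cp: "R_unimodular_copy Delta2 D" and DP: "D \<subseteq> P" and FD: "F \<inter> D \<subseteq> rel_interior F"
    and ad: "aff_dim (mink_diff P (convex hull {v. v extreme_point_of D \<and> v \<notin> F \<inter> D})) = 2"
  shows "locked F P"
  unfolding locked_def
proof (intro conjI allI impI)
  show "R_Delta2_free P" "polygon P" "F facet_of P" by fact+
  fix x assume "beyond F P x"
  then obtain a b where a: "a \<noteq> 0" and ah: "affine hull F = {y. a \<bullet> y = b}"
    and iP: "interior P \<subseteq> {y. a \<bullet> y < b}" and xb: "a \<bullet> x > b" unfolding beyond_def by blast
  obtain a0 b0 e e' where F0: "a0 \<noteq> 0" "P \<subseteq> {y. a0 \<bullet> y \<le> b0}" "F = P \<inter> {y. a0 \<bullet> y = b0}"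
    "F = closed_segment e e'" "e \<noteq> e'" "affine hull F = {y. a0 \<bullet> y = b0}"
    using facet_setup[OF pg fc] .
  have F: "F = closed_segment e e'" "e \<noteq> e'" "F \<subseteq> P" using F0 by auto
  have cvP: "convex P" using polygon_interior[OF pg] by simp
  obtain q where q: "q \<in> interior P" using polygon_interior(1)[OF pg] by blast
  have eP: "e \<in> P" "e' \<in> P" using F by auto
  have ae: "a \<bullet> e = b" "a \<bullet> e' = b" using ah F hull_subset[of F affine] by auto
  define C where "C = convex hull (insert x P)"
  have aq: "a \<bullet> q < b" using iP q by blast
  have relF: "rel_interior F \<subseteq> interior C"
  proof
    fix y assume "y \<in> rel_interior F"
    then have "y \<in> open_segment e e'" using F(1,2) rel_interior_closed_segment[of e e'] by simp
    then show "y \<in> interior C" unfolding C_def using seg_interior[OF cvP q aq eP ae F(2) xb a] by blast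
  qed
  have PC: "P \<subseteq> C" unfolding C_def by (meson hull_subset subset_insertI subset_trans)
  have iPC: "interior P \<subseteq> interior C" using PC interior_mono by blast
  obtain T where T: "R_unimodular_map T" "D = T ` Delta2" using cp unfolding R_unimodular_copy_def by blast
  obtain M c where Mc: "\<forall>i j. M$i$j \<in> \<int>" "\<bar>det M\<bar> = 1" "T = (\<lambda>y. M *v y + c)"
    using T(1) unfolding R_unimodular_map_def by blast
  have Dh: "D = convex hull {c, M *v axis 1 1 + c, M *v axis 2 1 + c}" using T(2) Mc(3) img_hull by simp
  define Ext where "Ext = {v. v extreme_point_of D}"
  have finE: "finite Ext" unfolding Ext_def Dh
    by (rule finite_subset[OF extreme_points_of_convex_hull]) auto
  have DE: "D = convex hull Ext" unfolding Ext_def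
    by (rule Krein_Milman_Minkowski) (auto simp: Dh finite_imp_compact_convex_hull)
  have ExtD: "Ext \<subseteq> D" unfolding Ext_def using extreme_point_of_def by auto
  define L where "L = convex hull {v. v extreme_point_of D \<and> v \<notin> F \<inter> D}"
  have LD: "L \<subseteq> D" unfolding L_def by (rule hull_minimal) (auto simp: extreme_point_of_def Dh)
  define md where "md = mink_diff P L"
  have cmd: "convex md" unfolding md_def using convex_mink_diff[OF cvP] .
  have admd: "aff_dim md = 2" using ad unfolding md_def L_def .
  then have "md \<noteq> {}" by auto
  then have "rel_interior md \<noteq> {}" using cmd rel_interior_eq_empty by blast
  then have "interior md \<noteq> {}" using admd interior_rel_interior_gen[of md] by simp
  then obtain t0 where "t0 \<in> interior md" by blast
  then obtain r where r: "r > 0" "ball t0 r \<subseteq> interior md" using open_contains_ball[of "interior md"] by blast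
  then have r: "r > 0" "ball t0 r \<subseteq> md" using interior_subset by blast+
  have LP: "L \<subseteq> P" using LD DP by blast
  have Lint: "v + lam *\<^sub>R t0 \<in> interior P" if v: "v \<in> L" and lam: "0 < lam" "lam \<le> 1" for v lam
  proof -
    have "ball (v + lam *\<^sub>R t0) (lam * r) \<subseteq> P"
    proof
      fix y assume y: "y \<in> ball (v + lam *\<^sub>R t0) (lam * r)"
      define u where "u = t0 + (1/lam) *\<^sub>R (y - v - lam *\<^sub>R t0)"
      have "dist t0 u = (1/lam) * norm (y - v - lam *\<^sub>R t0)" unfolding u_def dist_norm using lam by simp
      also have "\<dots> < (1/lam) * (lam * r)" using y lam unfolding mem_ball dist_norm
        by (intro mult_strict_left_mono) (auto simp: norm_minus_commute algebra_simps)
      also have "\<dots> = r" using lam by simp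
      finally have "u \<in> md" using r by auto
      then have vu: "v + u \<in> P" using v unfolding md_def mink_diff_def by auto
      have vP: "v \<in> P" using v LP by auto
      have "y = (1 - lam) *\<^sub>R v + lam *\<^sub>R (v + u)" unfolding u_def using lam
        by (simp add: algebra_simps)
      then show "y \<in> P" using cvP vP vu lam unfolding convex_def by simp
    qed
    moreover have "lam * r > 0" using lam r by simp
    ultimately show ?thesis using interior_maximal[OF _ open_ball] centre_in_ball by blast
  qed
  have "\<forall>v\<in>Ext \<inter> F. \<exists>\<epsilon>>0. ball v \<epsilon> \<subseteq> interior C"
  proof
    fix v assume "v \<in> Ext \<inter> F"
    then have "v \<in> interior C" using ExtD FD relF by blast
    then show "\<exists>\<epsilon>>0. ball v \<epsilon> \<subseteq> interior C" using open_contains_ball open_interior by blast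
  qed
  then obtain \<epsilon> where eps: "\<epsilon> > 0" "\<forall>v\<in>Ext \<inter> F. ball v \<epsilon> \<subseteq> interior C"
    using uniform_pos[of "Ext \<inter> F" "\<lambda>v \<epsilon>. ball v \<epsilon> \<subseteq> interior C"] finE by fastforce
  define lam where "lam = min 1 (\<epsilon> / (2 * (norm t0 + 1)))"
  have kp: "2 * (norm t0 + 1) > 0" using norm_ge_zero[of t0] by (smt (verit))
  then have lam: "0 < lam" "lam \<le> 1" unfolding lam_def using eps by auto
  have nl: "norm (lam *\<^sub>R t0) < \<epsilon>"
  proof -
    have "lam \<le> \<epsilon> / (2 * (norm t0 + 1))" unfolding lam_def by simp
    then have "lam * (2 * (norm t0 + 1)) \<le> \<epsilon>" using kp by (simp only: pos_le_divide_eq)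
    moreover have "lam * norm t0 < lam * (2 * (norm t0 + 1))"
    proof (rule mult_strict_left_mono)
      show "norm t0 < 2 * (norm t0 + 1)" using norm_ge_zero[of t0] by (smt (verit))
    qed (use lam in auto)
    ultimately have "lam * norm t0 < \<epsilon>" by linarith
    then show ?thesis using lam by simp
  qed
  have vert: "v + lam *\<^sub>R t0 \<in> interior C" if v: "v \<in> Ext" for v
  proof (cases "v \<in> F")
    case True
    then have "ball v \<epsilon> \<subseteq> interior C" using eps v by blast
    moreover have "v + lam *\<^sub>R t0 \<in> ball v \<epsilon>" using nl by (simp add: dist_norm)
    ultimately show ?thesis by blast
  next
    case False
    then have "v \<in> L" unfolding L_def using v by (intro hull_inc) (auto simp: Ext_def)
    then show ?thesis using Lint lam iPC by blast
  qed
  define D' where "D' = (\<lambda>y. y + lam *\<^sub>R t0) ` D"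
  have "D' = convex hull ((\<lambda>y. y + lam *\<^sub>R t0) ` Ext)" unfolding D'_def DE hull_transl ..
  also have "\<dots> \<subseteq> interior C" using vert by (intro hull_minimal) (auto simp: C_def)
  finally have "D' \<subseteq> interior C" .
  moreover have "R_unimodular_copy Delta2 D'"
    unfolding R_unimodular_copy_def R_unimodular_map_def D'_def T(2) Mc(3) copy_translate
    using Mc(1,2) by blast
  ultimately show "\<exists>D. R_unimodular_copy Delta2 D \<and> D \<subseteq> interior (convex hull (insert x P))"
    unfolding C_def by blast
qed




definition goodpt :: "(real^2) set \<Rightarrow> real^2 \<Rightarrow> real \<Rightarrow> real^2 \<Rightarrow> bool" where
  "goodpt P a b x \<longleftrightarrow> (\<forall>p\<in>P. \<forall>w\<in>closed_segment p x. a \<bullet> w = b \<longrightarrow> w \<in> P)"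

locale fs =
  fixes P :: "(real^2) set" and a :: "real^2" and b :: real and e e' :: "real^2"
  assumes cvx: "convex P" and cpt: "compact P" and a0: "a \<noteq> 0" and sub: "P \<subseteq> {y. a \<bullet> y \<le> b}"
    and Fe: "P \<inter> {y. a \<bullet> y = b} = closed_segment e e'" and ee: "e \<noteq> e'"
    and aff: "affine hull (closed_segment e e') = {y. a \<bullet> y = b}"
    and poly: "polyhedron P"
begin

lemma ae: "a \<bullet> e = b" "a \<bullet> e' = b" "e \<in> P" "e' \<in> P"
proof -
  have "e \<in> P \<inter> {y. a \<bullet> y = b}" "e' \<in> P \<inter> {y. a \<bullet> y = b}" unfolding Fe by auto
  then show "a \<bullet> e = b" "a \<bullet> e' = b" "e \<in> P" "e' \<in> P" by auto
qed

lemma am: "a \<bullet> midpoint e e' = b" by (rule inner_midpoint) (use ae in auto)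

lemma mP: "midpoint e e' \<in> P"
proof -
  have "midpoint e e' \<in> P \<inter> {y. a \<bullet> y = b}" unfolding Fe by simp
  then show ?thesis by blast
qed

lemma goodx: "\<exists>s0>0. \<forall>s. 0 < s \<longrightarrow> s < s0 \<longrightarrow> goodpt P a b (midpoint e e' + s *\<^sub>R a)"
proof -
  obtain H where H: "finite H" "P = \<Inter>H" "\<forall>S\<in>H. \<exists>h c. h \<noteq> 0 \<and> S = {x. h \<bullet> x \<le> c}"
    using poly unfolding polyhedron_def by blast
  let ?m = "midpoint e e'"
  have ev: "\<forall>S\<in>H. eventually (\<lambda>s. ?m + s *\<^sub>R a \<in> S \<or> {y. a \<bullet> y = b} \<subseteq> S) (at_right 0)"
  proof
    fix S assume S: "S \<in> H"
    then obtain h c where hc: "S = {x. h \<bullet> x \<le> c}" using H by blast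
    have PS: "P \<subseteq> S" using S H by blast
    have hm: "h \<bullet> ?m \<le> c" using mP PS hc by auto
    show "eventually (\<lambda>s. ?m + s *\<^sub>R a \<in> S \<or> {y. a \<bullet> y = b} \<subseteq> S) (at_right 0)"
    proof (cases "h \<bullet> ?m = c")
      case True
      have he: "h \<bullet> e \<le> c" "h \<bullet> e' \<le> c" using ae PS hc by auto
      have "h \<bullet> ?m = (h \<bullet> e + h \<bullet> e') / 2" by (simp add: midpoint_def inner_simps)
      then have he2: "h \<bullet> e = c" "h \<bullet> e' = c" using True he by auto
      have "{y. a \<bullet> y = b} \<subseteq> S"
      proof
        fix y assume "y \<in> {y. a \<bullet> y = b}"
        then have "y \<in> affine hull {e, e'}" using aff by simp
        then obtain u v where "u + v = 1" and yy: "y = u *\<^sub>R e + v *\<^sub>R e'" unfolding affine_hull_2 by blast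
        have "h \<bullet> y = (u + v) * c" unfolding yy using he2 by (simp add: inner_simps distrib_right)
        then show "y \<in> S" using hc \<open>u + v = 1\<close> by simp
      qed
      then show ?thesis by simp
    next
      case False
      then have hm': "h \<bullet> ?m < c" using hm by simp
      have "((\<lambda>s. h \<bullet> (?m + s *\<^sub>R a)) \<longlongrightarrow> h \<bullet> (?m + 0 *\<^sub>R a)) (at_right 0)"
        by (intro tendsto_intros)
      then have "eventually (\<lambda>s. h \<bullet> (?m + s *\<^sub>R a) < c) (at_right 0)"
        using hm' by (simp add: order_tendstoD(2))
      then show ?thesis by eventually_elim (simp add: hc)
    qed
  qed
  have "eventually (\<lambda>s. \<forall>S\<in>H. ?m + s *\<^sub>R a \<in> S \<or> {y. a \<bullet> y = b} \<subseteq> S) (at_right 0)"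
    using eventually_ball_finite[OF H(1) ev] .
  then obtain s0 where s0: "s0 > 0" "\<forall>s>0. s < s0 \<longrightarrow> (\<forall>S\<in>H. ?m + s *\<^sub>R a \<in> S \<or> {y. a \<bullet> y = b} \<subseteq> S)"
    using eventually_at_right[of "0::real" 1] by auto
  have "goodpt P a b (?m + s *\<^sub>R a)" if s: "0 < s" "s < s0" for s
    unfolding goodpt_def
  proof (intro ballI impI)
    fix p w assume p: "p \<in> P" and w: "w \<in> closed_segment p (?m + s *\<^sub>R a)" and aw: "a \<bullet> w = b"
    have "w \<in> S" if S: "S \<in> H" for S
    proof -
      obtain h c where hc: "S = {x. h \<bullet> x \<le> c}" using H S by blast
      have cS: "convex S" using hc convex_halfspace_le by blast
      have pS: "p \<in> S" using p S H by blast
      show ?thesis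
      proof (cases "?m + s *\<^sub>R a \<in> S")
        case True then show ?thesis using w pS cS closed_segment_subset by blast
      next
        case False then show ?thesis using s0 s S aw by blast
      qed
    qed
    then show "w \<in> P" using H by blast
  qed
  then show ?thesis using s0 by blast
qed

lemma near:
  assumes g: "goodpt P a b x" and x: "x = midpoint e e' + s *\<^sub>R a" and s: "s > 0"
    and z: "z \<in> convex hull (insert x P)"
  shows "\<exists>p\<in>P. norm (z - p) \<le> s * norm a"
proof (cases "a \<bullet> z \<le> b")
  case True
  have ax: "a \<bullet> x > b" unfolding x using am s a0 by (simp add: inner_simps)
  have "z \<in> P" using capL[OF cvx sub Fe ax g[unfolded goodpt_def] z] True by blast
  then show ?thesis using s by (intro bexI[of _ z]) auto
next
  case False
  have ax: "a \<bullet> x > b" unfolding x using am s a0 by (simp add: inner_simps)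
  have "z \<in> convex hull {e,e',x}" using capL[OF cvx sub Fe ax g[unfolded goodpt_def] z] False by auto
  then obtain u v w where uvw: "0 \<le> u" "0 \<le> v" "0 \<le> w" "u + v + w = 1" and zz: "z = u *\<^sub>R e + v *\<^sub>R e' + w *\<^sub>R x"
    unfolding convex_hull_3 by blast
  define p where "p = u *\<^sub>R e + v *\<^sub>R e' + w *\<^sub>R midpoint e e'"
  have "p \<in> convex hull {e, e', midpoint e e'}" unfolding convex_hull_3 p_def using uvw by blast
  also have "\<dots> \<subseteq> closed_segment e e'"
    by (intro hull_minimal) (auto simp: convex_closed_segment)
  also have "\<dots> \<subseteq> P" using Fe by auto
  finally have pP: "p \<in> P" .
  have "z - p = (w * s) *\<^sub>R a" unfolding zz p_def x by (simp add: algebra_simps)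
  then have "norm (z - p) = w * s * norm a" using uvw s by simp
  also have "\<dots> \<le> s * norm a" using uvw s by (simp add: mult_left_le_one_le mult_le_cancel_right1)
  finally show ?thesis using pP by blast
qed

lemma intPsub:
  assumes g: "goodpt P a b x" and ax: "a \<bullet> x > b"
  shows "interior (convex hull (insert x P)) \<inter> {y. a \<bullet> y < b} \<subseteq> interior P"
proof (rule interior_maximal)
  show "interior (convex hull insert x P) \<inter> {y. a \<bullet> y < b} \<subseteq> P"
    using capL[OF cvx sub Fe ax g[unfolded goodpt_def]] interior_subset by fastforce
  show "open (interior (convex hull insert x P) \<inter> {y. a \<bullet> y < b})"
    by (intro open_Int open_interior open_halfspace_lt)
qed

end




locale seqs = fs +
  fixes M0 :: "real^2^2" and c0 :: "real^2" and t :: "nat \<Rightarrow> real^2" and sq :: "nat \<Rightarrow> real"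
  assumes spos: "\<And>n. 0 < sq n" and slim: "sq \<longlonglongrightarrow> 0"
    and sgood: "\<And>n. goodpt P a b (midpoint e e' + sq n *\<^sub>R a)"
    and tlim: "t \<longlonglongrightarrow> 0"
    and KF: "\<And>n y. y \<in> convex hull {c0, M0 *v axis 1 1 + c0, M0 *v axis 2 1 + c0} \<Longrightarrow>
              y + t n \<in> interior (convex hull (insert (midpoint e e' + sq n *\<^sub>R a) P))"
    and NF: "\<And>u. \<not> (\<forall>v\<in>{c0, M0 *v axis 1 1 + c0, M0 *v axis 2 1 + c0}. v + u \<in> interior P)"
begin

abbreviation "E \<equiv> {c0, M0 *v axis 1 1 + c0, M0 *v axis 2 1 + c0}"
abbreviation "D0 \<equiv> convex hull E"
abbreviation "X n \<equiv> midpoint e e' + sq n *\<^sub>R a"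
abbreviation "CC n \<equiv> convex hull (insert (X n) P)"

lemma finE: "finite E" by simp

lemma aX: "a \<bullet> X n > b"
proof -
  have "a \<bullet> a > 0" using a0 by simp
  then show ?thesis using am spos[of n] by (simp add: inner_simps)
qed

lemma KFC: "y \<in> D0 \<Longrightarrow> y + t n \<in> CC n"
  using KF interior_subset by blast

lemma D0P: "D0 \<subseteq> P"
proof
  fix y assume y: "y \<in> D0"
  have "\<forall>n. \<exists>p\<in>P. norm ((y + t n) - p) \<le> sq n * norm a"
    using near[OF sgood refl spos KFC[OF y]] by blast
  then obtain pf where pf: "\<And>n. pf n \<in> P" "\<And>n. norm ((y + t n) - pf n) \<le> sq n * norm a" by metis
  have "(\<lambda>n. sq n * norm a) \<longlonglongrightarrow> 0 * norm a" by (intro tendsto_intros slim)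
  then have lim0: "(\<lambda>n. sq n * norm a) \<longlonglongrightarrow> 0" by simp
  have "(\<lambda>n. (y + t n) - pf n) \<longlonglongrightarrow> 0"
    by (rule Lim_null_comparison[OF always_eventually lim0]) (use pf(2) in blast)
  moreover have "(\<lambda>n. y + t n) \<longlonglongrightarrow> y + 0" by (intro tendsto_intros tlim)
  ultimately have "(\<lambda>n. (y + t n) - ((y + t n) - pf n)) \<longlonglongrightarrow> (y + 0) - 0" by (rule tendsto_diff[rotated])
  then have "pf \<longlonglongrightarrow> y" by simp
  then show "y \<in> P" using cpt pf(1) by (intro Lim_in_closed_set[of P pf]) (auto simp: compact_imp_closed)
qed

lemma aD: "y \<in> D0 \<Longrightarrow> a \<bullet> y \<le> b" using D0P sub by auto

lemma ev_int:
  assumes v: "v \<in> D0" "a \<bullet> v < b"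
  shows "eventually (\<lambda>n. v + t n \<in> interior P) sequentially"
proof -
  have "(\<lambda>n. a \<bullet> (v + t n)) \<longlonglongrightarrow> a \<bullet> (v + 0)" by (intro tendsto_intros tlim)
  then have "eventually (\<lambda>n. a \<bullet> (v + t n) < b) sequentially" using v(2) by (simp add: order_tendstoD(2))
  then show ?thesis
  proof eventually_elim
    case (elim n)
    then show ?case using intPsub[OF sgood aX] KF[OF v(1)] by blast
  qed
qed

lemma ex_top: "\<exists>v\<in>E. a \<bullet> v = b"
proof (rule ccontr)
  assume "\<not> ?thesis"
  then have lt: "\<forall>v\<in>E. a \<bullet> v < b" using aD[OF hull_inc] by (meson less_eq_real_def)
  have "\<forall>v\<in>E. eventually (\<lambda>n. v + t n \<in> interior P) sequentially"
  proof
    fix v assume v: "v \<in> E"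
    show "eventually (\<lambda>n. v + t n \<in> interior P) sequentially" using ev_int[OF hull_inc[OF v]] lt v by blast
  qed
  then have "eventually (\<lambda>n. \<forall>v\<in>E. v + t n \<in> interior P) sequentially"
    by (intro eventually_ball_finite finE)
  then obtain n where "\<forall>v\<in>E. v + t n \<in> interior P" unfolding eventually_sequentially by blast
  then show False using NF by blast
qed

lemma atpos: "a \<bullet> t n > 0"
proof (rule ccontr)
  assume at: "\<not> a \<bullet> t n > 0"
  have "\<forall>v\<in>E. \<exists>r>0. ball (v + t n) r \<subseteq> interior (CC n)"
  proof
    fix v assume v: "v \<in> E"
    have "v + t n \<in> interior (CC n)" using KF[OF hull_inc[OF v]] .
    then show "\<exists>r>0. ball (v + t n) r \<subseteq> interior (CC n)" using open_contains_ball open_interior by blast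
  qed
  then obtain r where r: "r > 0" "\<forall>v\<in>E. ball (v + t n) r \<subseteq> interior (CC n)"
    using uniform_pos[OF finE, of "\<lambda>v r. ball (v + t n) r \<subseteq> interior (CC n)"] by fastforce
  have na: "norm a > 0" using a0 by simp
  define u where "u = t n - (r / (2 * norm a)) *\<^sub>R a"
  have "v + u \<in> interior P" if v: "v \<in> E" for v
  proof -
    have "dist (v + t n) (v + u) = r / 2" unfolding u_def dist_norm using na r by simp
    then have "v + u \<in> interior (CC n)" using r v by force
    moreover have "a \<bullet> (v + u) < b"
    proof -
      have "a \<bullet> a = norm a * norm a" by (simp add: dot_square_norm power2_eq_square)
      then have "a \<bullet> (v + u) = a \<bullet> v + a \<bullet> t n - r / 2 * norm a" unfolding u_def using na
        by (simp add: inner_simps)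
      moreover have "a \<bullet> v \<le> b" using aD[OF hull_inc[OF v]] .
      moreover have "r / 2 * norm a > 0" using r na by simp
      ultimately show ?thesis using at by linarith
    qed
    ultimately show ?thesis using intPsub[OF sgood aX] by blast
  qed
  then show False using NF by blast
qed

lemma gdec:
  assumes gg: "(g = e \<and> g' = e') \<or> (g = e' \<and> g' = e)" and gD: "g \<in> D0"
  shows "\<exists>k h. t n = k *\<^sub>R (g' - g) + h *\<^sub>R a \<and> k > 0 \<and> 0 \<le> h \<and> h \<le> 2 * sq n * k"
proof -
  have z: "g + t n \<in> CC n" using KFC[OF gD] .
  have ag: "a \<bullet> g = b" "a \<bullet> g' = b" using gg ae by auto
  have az: "a \<bullet> (g + t n) > b" using ag atpos[of n] by (simp add: inner_simps)
  have "g + t n \<in> convex hull {e, e', X n}"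
    using capL[OF cvx sub Fe aX sgood[unfolded goodpt_def] z] az by auto
  moreover have "{e, e', X n} = {g, g', X n}" using gg by auto
  ultimately have z3: "g + t n \<in> convex hull {g, g', X n}" by simp
  have xm: "X n = midpoint g g' + sq n *\<^sub>R a" using gg midpoint_sym by metis
  show ?thesis using decomp[OF z3 xm ag az spos[of n]] by simp
qed

lemma notboth: "\<not> (e \<in> D0 \<and> e' \<in> D0)"
proof
  assume both: "e \<in> D0 \<and> e' \<in> D0"
  obtain k h where 1: "t 0 = k *\<^sub>R (e' - e) + h *\<^sub>R a" "k > 0" using gdec[of e e'] both by blast
  obtain k' h' where 2: "t 0 = k' *\<^sub>R (e - e') + h' *\<^sub>R a" "k' > 0" using gdec[of e' e] both by blast
  define f where "f = e' - e"
  have af: "a \<bullet> f = 0" unfolding f_def using ae by (simp add: inner_simps)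
  have ff: "f \<bullet> f > 0" unfolding f_def using ee by simp
  have t1: "t 0 = k *\<^sub>R f + h *\<^sub>R a" using 1 unfolding f_def by simp
  have t2: "t 0 = (- k') *\<^sub>R f + h' *\<^sub>R a" using 2 unfolding f_def by (simp add: algebra_simps)
  have fa: "f \<bullet> a = 0" using af by (simp add: inner_commute)
  have "f \<bullet> t 0 = k * (f \<bullet> f)" unfolding t1 using fa by (simp add: inner_simps)
  moreover have "f \<bullet> t 0 = - k' * (f \<bullet> f)" unfolding t2 using fa by (simp add: inner_simps)
  ultimately have "(k + k') * (f \<bullet> f) = 0" by (simp add: algebra_simps)
  then show False using 1 2 ff by simp
qed

end




lemma segparam: "y \<in> closed_segment g g' \<Longrightarrow> \<exists>sg. 0 \<le> sg \<and> sg \<le> 1 \<and> y = g + sg *\<^sub>R (g' - g)"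
  unfolding in_segment by (auto simp: algebra_simps)

lemma segin: "0 \<le> sg \<Longrightarrow> sg \<le> 1 \<Longrightarrow> g + sg *\<^sub>R (g' - g) \<in> closed_segment g g'"
  unfolding in_segment by (intro exI[of _ sg]) (auto simp: algebra_simps)

lemma segopen: "g \<noteq> g' \<Longrightarrow> 0 < sg \<Longrightarrow> sg < 1 \<Longrightarrow> g + sg *\<^sub>R (g' - g) \<in> open_segment g g'"
  unfolding in_segment by (auto simp: algebra_simps intro!: exI[of _ sg])

context seqs
begin

lemma ED0: "v \<in> E \<Longrightarrow> v \<in> D0" by (rule hull_inc)

lemma hf_le:
  assumes gg: "(g = e \<and> g' = e') \<or> (g = e' \<and> g' = e)" and gD: "g \<in> D0"
    and v: "v \<in> D0" "a \<bullet> v < b" and hv: "h \<bullet> v = c" and PS: "P \<subseteq> {x. h \<bullet> x \<le> c}"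
  shows "h \<bullet> (g' - g) \<le> 0"
proof (rule ccontr)
  assume "\<not> ?thesis"
  then have hp: "h \<bullet> (g' - g) > 0" by simp
  have ev1: "eventually (\<lambda>n. h \<bullet> (g' - g) \<le> 2 * sq n * \<bar>h \<bullet> a\<bar>) sequentially"
    using ev_int[OF v]
  proof eventually_elim
    case (elim n)
    then have "h \<bullet> (v + t n) \<le> c" using PS interior_subset by blast
    then have ht: "h \<bullet> t n \<le> 0" using hv by (simp add: inner_simps)
    obtain k hh where kh: "t n = k *\<^sub>R (g' - g) + hh *\<^sub>R a" "k > 0" "0 \<le> hh" "hh \<le> 2 * sq n * k"
      using gdec[OF gg gD] by blast
    have "k * (h \<bullet> (g' - g)) + hh * (h \<bullet> a) \<le> 0" using ht unfolding kh(1) by (simp add: inner_simps)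
    then have "k * (h \<bullet> (g' - g)) \<le> - (hh * (h \<bullet> a))" by linarith
    also have "\<dots> \<le> hh * \<bar>h \<bullet> a\<bar>" using kh(3)
      by (metis abs_ge_minus_self abs_mult abs_of_nonneg minus_mult_right mult_left_mono)
    also have "\<dots> \<le> (2 * sq n * k) * \<bar>h \<bullet> a\<bar>" using kh(4) by (intro mult_right_mono) auto
    finally have "k * (h \<bullet> (g' - g)) \<le> k * (2 * sq n * \<bar>h \<bullet> a\<bar>)" by (simp add: algebra_simps)
    then show ?case using kh(2) by simp
  qed
  have "(\<lambda>n. 2 * sq n * \<bar>h \<bullet> a\<bar>) \<longlonglongrightarrow> 2 * 0 * \<bar>h \<bullet> a\<bar>" by (intro tendsto_intros slim)
  then have "eventually (\<lambda>n. 2 * sq n * \<bar>h \<bullet> a\<bar> < h \<bullet> (g' - g)) sequentially"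
    using hp by (simp add: order_tendstoD(2))
  with ev1 have "eventually (\<lambda>n. False) sequentially" by eventually_elim simp
  then show False by simp
qed

lemma mu_exists:
  assumes gg: "(g = e \<and> g' = e') \<or> (g = e' \<and> g' = e)" and g'D: "g' \<notin> D0"
  shows "\<exists>mu\<ge>0. (\<forall>v\<in>E. v + mu *\<^sub>R (g' - g) \<in> P) \<and>
                  (\<forall>y\<in>D0. a \<bullet> y = b \<longrightarrow> y + mu *\<^sub>R (g' - g) \<in> open_segment g g')"
proof -
  have seg: "closed_segment g g' = closed_segment e e'" using gg closed_segment_commute by blast
  have gne: "g \<noteq> g'" using gg ee by blast
  have LF: "y \<in> closed_segment g g'" if "y \<in> D0" "a \<bullet> y = b" for y
    using that D0P Fe seg by blast
  show ?thesis
  proof (cases "g \<in> D0")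
    case False
    have "\<forall>y\<in>D0. a \<bullet> y = b \<longrightarrow> y \<in> open_segment g g'"
      using LF False g'D unfolding open_segment_def by blast
    moreover have "\<forall>v\<in>E. v \<in> P" using D0P ED0 by blast
    ultimately show ?thesis by (intro exI[of _ 0]) auto
  next
    case gD: True
    define f where "f = g' - g"
    have ff: "f \<bullet> f > 0" unfolding f_def using gne by simp
    define K where "K = D0 \<inter> {y. a \<bullet> y = b}"
    have cK: "compact K" unfolding K_def
      by (intro compact_Int_closed finite_imp_compact_convex_hull finE closed_hyperplane)
    have ag: "a \<bullet> g = b" using gg ae by auto
    have gK: "g \<in> K" unfolding K_def using gD ag by simp
    define phi where "phi y = ((y - g) \<bullet> f) / (f \<bullet> f)" for y
    have phip: "phi (g + sg *\<^sub>R f) = sg" for sg unfolding phi_def using ff by (simp add: inner_simps)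
    have "continuous_on K phi" unfolding phi_def using ff by (intro continuous_intros) auto
    then obtain ys where ys: "ys \<in> K" "\<forall>y\<in>K. phi y \<le> phi ys"
      using continuous_attains_sup[OF cK] gK by blast
    have Kpar: "\<exists>sg. 0 \<le> sg \<and> sg \<le> 1 \<and> y = g + sg *\<^sub>R f \<and> phi y = sg" if "y \<in> K" for y
    proof -
      have "y \<in> closed_segment g g'" using that LF unfolding K_def by blast
      then obtain sg where "0 \<le> sg" "sg \<le> 1" "y = g + sg *\<^sub>R f" using segparam unfolding f_def by blast
      then show ?thesis using phip by blast
    qed
    obtain ss where ss: "0 \<le> ss" "ss \<le> 1" "ys = g + ss *\<^sub>R f" "phi ys = ss" using Kpar[OF ys(1)] by blast
    have ss1: "ss < 1"
    proof (rule ccontr)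
      assume "\<not> ss < 1"
      then have "ys = g'" using ss unfolding f_def by simp
      then show False using ys(1) g'D unfolding K_def by blast
    qed
    obtain H where H: "finite H" "P = \<Inter>H" "\<forall>S\<in>H. \<exists>h c. h \<noteq> 0 \<and> S = {x. h \<bullet> x \<le> c}"
      using poly unfolding polyhedron_def by blast
    have lowv: "\<exists>r>0. \<forall>mu. 0 \<le> mu \<longrightarrow> mu \<le> r \<longrightarrow> v + mu *\<^sub>R f \<in> P"
      if v: "v \<in> E" "a \<bullet> v < b" for v
    proof -
      have vD: "v \<in> D0" using v ED0 by blast
      have "\<forall>S\<in>H. \<exists>r>0. \<forall>mu. 0 \<le> mu \<longrightarrow> mu \<le> r \<longrightarrow> v + mu *\<^sub>R f \<in> S"
      proof
        fix S assume S: "S \<in> H"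
        then obtain h c where hc: "S = {x. h \<bullet> x \<le> c}" using H by blast
        have PS: "P \<subseteq> {x. h \<bullet> x \<le> c}" using S H hc by blast
        have hv: "h \<bullet> v \<le> c" using PS D0P vD by blast
        show "\<exists>r>0. \<forall>mu. 0 \<le> mu \<longrightarrow> mu \<le> r \<longrightarrow> v + mu *\<^sub>R f \<in> S"
        proof (cases "h \<bullet> v = c")
          case True
          have "h \<bullet> f \<le> 0" unfolding f_def using hf_le[OF gg gD vD v(2) True PS] .
          then have "\<forall>mu. 0 \<le> mu \<longrightarrow> v + mu *\<^sub>R f \<in> S"
            using True hc by (auto simp: inner_simps mult_nonneg_nonpos)
          then show ?thesis by (intro exI[of _ 1]) auto
        next
          case False
          then have hvl: "h \<bullet> v < c" using hv by simp
          define r where "r = (c - h \<bullet> v) / (\<bar>h \<bullet> f\<bar> + 1)"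
          have rp: "r > 0" unfolding r_def using hvl by (simp add: add_pos_nonneg)
          have "v + mu *\<^sub>R f \<in> S" if mu: "0 \<le> mu" "mu \<le> r" for mu
          proof -
            have "mu * (h \<bullet> f) \<le> mu * \<bar>h \<bullet> f\<bar>" using mu by (intro mult_left_mono) auto
            also have "\<dots> \<le> r * (\<bar>h \<bullet> f\<bar> + 1)" using mu by (intro mult_mono) auto
            also have "\<dots> = c - h \<bullet> v" unfolding r_def by (simp add: add_pos_nonneg)
            finally show ?thesis using hc by (simp add: inner_simps)
          qed
          then show ?thesis using rp by blast
        qed
      qed
      then obtain r where "r > 0" "\<forall>S\<in>H. \<forall>mu. 0 \<le> mu \<longrightarrow> mu \<le> r \<longrightarrow> v + mu *\<^sub>R f \<in> S"
        using uniform_pos[OF H(1), of "\<lambda>S r. \<forall>mu. 0 \<le> mu \<longrightarrow> mu \<le> r \<longrightarrow> v + mu *\<^sub>R f \<in> S"]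
        by fastforce
      then show ?thesis using H(2) by blast
    qed
    obtain r1 where r1: "r1 > 0" "\<forall>v\<in>{v\<in>E. a \<bullet> v < b}. \<forall>mu. 0 \<le> mu \<longrightarrow> mu \<le> r1 \<longrightarrow> v + mu *\<^sub>R f \<in> P"
      using uniform_pos[of "{v\<in>E. a \<bullet> v < b}" "\<lambda>v r. \<forall>mu. 0 \<le> mu \<longrightarrow> mu \<le> r \<longrightarrow> v + mu *\<^sub>R f \<in> P"] lowv
      by fastforce
    define mu where "mu = min r1 ((1 - ss) / 2)"
    have mup: "mu > 0" "mu \<le> r1" "mu \<le> (1 - ss)/2" unfolding mu_def using r1(1) ss1
      by (simp_all only: min.bounded_iff min_le_iff_disj, auto)
    have topK: "y + mu *\<^sub>R f \<in> open_segment g g' \<and> y + mu *\<^sub>R f \<in> P" if y: "y \<in> K" for y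
    proof -
      obtain sg where sg: "0 \<le> sg" "sg \<le> 1" "y = g + sg *\<^sub>R f" "phi y = sg" using Kpar[OF y] by blast
      have "sg \<le> ss" using ys(2) y sg(4) ss(4) by metis
      moreover have "mu * 2 \<le> 1 - ss" using mup(3) by simp
      ultimately have b1: "0 < sg + mu" "sg + mu < 1" using sg(1) mup(1) ss1 by linarith+
      have yy: "y + mu *\<^sub>R f = g + (sg + mu) *\<^sub>R (g' - g)" unfolding sg(3) f_def by (simp add: algebra_simps)
      have "y + mu *\<^sub>R f \<in> open_segment g g'" unfolding yy using segopen[OF gne b1] .
      moreover then have "y + mu *\<^sub>R f \<in> P" using seg Fe unfolding open_segment_def by blast
      ultimately show ?thesis by blast
    qed
    have "\<forall>v\<in>E. v + mu *\<^sub>R f \<in> P"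
    proof
      fix v assume v: "v \<in> E"
      have "a \<bullet> v \<le> b" using aD[OF ED0[OF v]] .
      then show "v + mu *\<^sub>R f \<in> P"
      proof (cases "a \<bullet> v < b")
        case True then show ?thesis using r1 v mup by auto
      next
        case False
        then have eq: "a \<bullet> v = b" using \<open>a \<bullet> v \<le> b\<close> by simp
        then show ?thesis using topK[of v] ED0[OF v] unfolding K_def by blast
      qed
    qed
    moreover have "\<forall>y\<in>D0. a \<bullet> y = b \<longrightarrow> y + mu *\<^sub>R f \<in> open_segment g g'"
      using topK unfolding K_def by blast
    ultimately show ?thesis using mup unfolding f_def by (intro exI[of _ mu]) auto
  qed
qed

end




context seqs
begin

lemma construct:
  "\<exists>tau. (\<lambda>y. y + tau) ` D0 \<subseteq> P \<and> closed_segment e e' \<inter> (\<lambda>y. y + tau) ` D0 \<noteq> {} \<and>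
     closed_segment e e' \<inter> (\<lambda>y. y + tau) ` D0 \<subseteq> open_segment e e' \<and>
     aff_dim (mink_diff P (convex hull {v. v extreme_point_of ((\<lambda>y. y + tau) ` D0) \<and>
        v \<notin> closed_segment e e' \<inter> (\<lambda>y. y + tau) ` D0})) = 2"
proof -
  obtain g g' where gg: "(g = e \<and> g' = e') \<or> (g = e' \<and> g' = e)" and g'D: "g' \<notin> D0"
  proof (cases "e' \<in> D0")
    case True
    then have "e \<notin> D0" using notboth by blast
    then show ?thesis using that[of e' e] by blast
  next
    case False
    then show ?thesis using that[of e e'] by blast
  qed
  obtain mu where mu: "mu \<ge> 0" "\<forall>v\<in>E. v + mu *\<^sub>R (g' - g) \<in> P"
    "\<forall>y\<in>D0. a \<bullet> y = b \<longrightarrow> y + mu *\<^sub>R (g' - g) \<in> open_segment g g'"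
    using mu_exists[OF gg g'D] by blast
  have segc: "closed_segment g g' = closed_segment e e'" using gg closed_segment_commute by blast
  have sego: "open_segment g g' = open_segment e e'" using gg open_segment_commute by blast
  define tau where "tau = mu *\<^sub>R (g' - g)"
  have atau: "a \<bullet> tau = 0" unfolding tau_def using gg ae by (auto simp: inner_simps)
  define Dt where "Dt = (\<lambda>y. y + tau) ` D0"
  have DtE: "Dt = convex hull ((\<lambda>y. y + tau) ` E)" unfolding Dt_def hull_transl ..
  have DtP: "Dt \<subseteq> P" unfolding DtE using mu(2) cvx unfolding tau_def by (intro hull_minimal) auto
  have openF: "open_segment e e' \<subseteq> closed_segment e e'" unfolding open_segment_def by blast
  have ne: "closed_segment e e' \<inter> Dt \<noteq> {}"
  proof -
    obtain v where v: "v \<in> E" "a \<bullet> v = b" using ex_top by blast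
    have "v + tau \<in> open_segment e e'" using mu(3) ED0[OF v(1)] v(2) sego unfolding tau_def by blast
    moreover have "v + tau \<in> Dt" unfolding Dt_def using ED0[OF v(1)] by blast
    ultimately show ?thesis using openF by blast
  qed
  have subo: "closed_segment e e' \<inter> Dt \<subseteq> open_segment e e'"
  proof
    fix z assume z: "z \<in> closed_segment e e' \<inter> Dt"
    then obtain y where y: "y \<in> D0" "z = y + tau" unfolding Dt_def by blast
    have "a \<bullet> z = b" using z Fe by blast
    then have "a \<bullet> y = b" using y(2) atau by (simp add: inner_simps)
    then show "z \<in> open_segment e e'" using mu(3) y sego unfolding tau_def by blast
  qed
  define Ls where "Ls = {v. v extreme_point_of Dt \<and> v \<notin> closed_segment e e' \<inter> Dt}"
  define El where "El = {v\<in>E. a \<bullet> v < b}"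
  have finEl: "finite El" unfolding El_def by simp
  have Lsub: "Ls \<subseteq> (\<lambda>y. y + tau) ` El"
  proof
    fix v assume v: "v \<in> Ls"
    then have "v \<in> (\<lambda>y. y + tau) ` E" using extreme_points_of_convex_hull[of "(\<lambda>y. y + tau) ` E"]
      unfolding Ls_def DtE by blast
    then obtain w where w: "w \<in> E" "v = w + tau" by blast
    have vD: "v \<in> Dt" using v unfolding Ls_def extreme_point_of_def by blast
    have "a \<bullet> w \<noteq> b"
    proof
      assume "a \<bullet> w = b"
      then have "v \<in> open_segment e e'" using mu(3) ED0[OF w(1)] w(2) sego unfolding tau_def by blast
      then show False using v vD openF unfolding Ls_def by blast
    qed
    moreover have "a \<bullet> w \<le> b" using aD[OF ED0[OF w(1)]] .
    ultimately show "v \<in> (\<lambda>y. y + tau) ` El" using w unfolding El_def by auto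
  qed
  have "\<forall>w\<in>El. eventually (\<lambda>n. w + t n \<in> interior P) sequentially"
    using ev_int ED0 unfolding El_def by blast
  then have "eventually (\<lambda>n. \<forall>w\<in>El. w + t n \<in> interior P) sequentially"
    by (rule eventually_ball_finite[OF finEl])
  then obtain n where n: "\<forall>w\<in>El. w + t n \<in> interior P" unfolding eventually_sequentially by blast
  have "\<forall>w\<in>El. \<exists>r>0. ball (w + t n) r \<subseteq> P"
  proof
    fix w assume "w \<in> El"
    then have "w + t n \<in> interior P" using n by blast
    then obtain r where "r > 0" "ball (w + t n) r \<subseteq> interior P"
      using open_contains_ball[of "interior P"] by blast
    then show "\<exists>r>0. ball (w + t n) r \<subseteq> P" using interior_subset by blast
  qed
  then obtain r where r: "r > 0" "\<forall>w\<in>El. ball (w + t n) r \<subseteq> P"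
    using uniform_pos[OF finEl, of "\<lambda>w r. ball (w + t n) r \<subseteq> P"] by fastforce
  have bsub: "ball (t n - tau) r \<subseteq> mink_diff P (convex hull Ls)"
  proof
    fix u assume u: "u \<in> ball (t n - tau) r"
    have "(\<lambda>y. y + u) ` (convex hull Ls) = convex hull ((\<lambda>y. y + u) ` Ls)" by (rule hull_transl)
    also have "\<dots> \<subseteq> P"
    proof (rule hull_minimal)
      show "convex P" by (rule cvx)
      show "(\<lambda>y. y + u) ` Ls \<subseteq> P"
      proof
        fix z assume "z \<in> (\<lambda>y. y + u) ` Ls"
        then obtain w where w: "w \<in> El" "z = w + tau + u" using Lsub by blast
        have "dist (w + t n) z = dist (t n - tau) u" unfolding w(2) dist_norm by (simp add: algebra_simps)
        then have "z \<in> ball (w + t n) r" using u by simp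
        then show "z \<in> P" using r w by blast
      qed
    qed
    finally show "u \<in> mink_diff P (convex hull Ls)" unfolding mink_diff_def by blast
  qed
  have "t n - tau \<in> interior (mink_diff P (convex hull Ls))"
    using interior_maximal[OF bsub open_ball] centre_in_ball[of "t n - tau" r] r(1) by blast
  then have "aff_dim (mink_diff P (convex hull Ls)) = 2"
    using aff_dim_nonempty_interior[of "mink_diff P (convex hull Ls)"] by auto
  then show ?thesis using DtP ne subo unfolding Ls_def Dt_def by blast
qed

end




lemma finite_int_bounded: "finite {r::real. r \<in> \<int> \<and> \<bar>r\<bar> \<le> K}"
proof (rule finite_subset)
  show "{r::real. r \<in> \<int> \<and> \<bar>r\<bar> \<le> K} \<subseteq> of_int ` {-\<lceil>K\<rceil>..\<lceil>K\<rceil>}"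
  proof
    fix r :: real assume "r \<in> {r. r \<in> \<int> \<and> \<bar>r\<bar> \<le> K}"
    then obtain k where k: "r = of_int k" "\<bar>of_int k\<bar> \<le> K" by (auto elim: Ints_cases)
    have kk: "real_of_int k \<le> K" "- real_of_int k \<le> K" using k(2) by (auto simp: abs_le_iff)
    have "k \<le> \<lceil>K\<rceil>" unfolding le_ceiling_iff using kk by simp
    moreover have "-k \<le> \<lceil>K\<rceil>" unfolding le_ceiling_iff using kk by simp
    ultimately have "k \<le> \<lceil>K\<rceil>" "-\<lceil>K\<rceil> \<le> k" by simp_all
    then show "r \<in> of_int ` {-\<lceil>K\<rceil>..\<lceil>K\<rceil>}" using k by auto
  qed
qed simp

context fs
begin

lemma extract_seq:
  assumes fr0: "\<And>M c. (\<forall>i j. M$i$j \<in> \<int>) \<Longrightarrow> \<bar>det M\<bar> = 1 \<Longrightarrow> \<not> ((\<lambda>y. M *v y + c) ` Delta2 \<subseteq> interior P)"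
    and lk: "\<And>x. a \<bullet> x > b \<Longrightarrow> \<exists>M c. (\<forall>i j. M$i$j \<in> \<int>) \<and> \<bar>det M\<bar> = 1 \<and>
               (\<lambda>y. M *v y + c) ` Delta2 \<subseteq> interior (convex hull (insert x P))"
  shows "\<exists>M0 c0 t sq. (\<forall>i j. M0$i$j \<in> \<int>) \<and> \<bar>det M0\<bar> = 1 \<and> seqs P a b e e' M0 c0 t sq"
proof -
  obtain s0 where s0: "s0 > 0" "\<forall>s. 0 < s \<longrightarrow> s < s0 \<longrightarrow> goodpt P a b (midpoint e e' + s *\<^sub>R a)"
    using goodx by blast
  define s where "s n = s0 / real (n + 2)" for n
  have spos: "0 < s n" "s n < s0" for n
  proof -
    show "0 < s n" unfolding s_def using s0(1) by simp
    have "s0 * 1 < s0 * real (n + 2)" using s0(1) by (intro mult_strict_left_mono) auto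
    then show "s n < s0" unfolding s_def using s0(1) by (simp add: divide_less_eq)
  qed
  have slim: "s \<longlonglongrightarrow> 0"
  proof -
    have "(\<lambda>n. s0 / of_nat (n + 2)) \<longlonglongrightarrow> (0::real)"
      using LIMSEQ_ignore_initial_segment[OF lim_const_over_n[of s0], of 2] .
    then show ?thesis unfolding s_def by simp
  qed
  define X where "X n = midpoint e e' + s n *\<^sub>R a" for n
  have aX: "a \<bullet> X n > b" for n
  proof -
    have "a \<bullet> a > 0" using a0 by simp
    then show ?thesis unfolding X_def using am spos(1)[of n] by (simp add: inner_simps)
  qed
  have "\<forall>n. \<exists>M c. (\<forall>i j. M$i$j \<in> \<int>) \<and> \<bar>det M\<bar> = 1 \<and>
               (\<lambda>y. M *v y + c) ` Delta2 \<subseteq> interior (convex hull (insert (X n) P))"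
    using lk aX by blast
  then obtain Mf cf where MC: "\<And>n. (\<forall>i j. Mf n $i$j \<in> \<int>)" "\<And>n. \<bar>det (Mf n)\<bar> = 1"
    "\<And>n. (\<lambda>y. Mf n *v y + cf n) ` Delta2 \<subseteq> interior (convex hull (insert (X n) P))" by metis
  obtain R0 where R0: "\<forall>p\<in>P. norm p \<le> R0" using compact_imp_bounded[OF cpt] unfolding bounded_iff by blast
  have R0p: "0 \<le> R0" using R0 ae(3) norm_ge_zero order_trans by blast
  define R where "R = R0 + norm (midpoint e e') + s0 * norm a"
  have Cb: "convex hull (insert (X n) P) \<subseteq> cball 0 R" for n
  proof (rule hull_minimal)
    show "convex (cball (0::real^2) R)" by simp
    have "norm (X n) \<le> norm (midpoint e e') + s n * norm a"
      unfolding X_def using spos(1)[of n] norm_triangle_ineq[of "midpoint e e'" "s n *\<^sub>R a"] by simp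
    also have "\<dots> \<le> R" unfolding R_def using spos(2)[of n] R0p
      by (smt (verit) mult_right_mono norm_ge_zero)
    finally have "norm (X n) \<le> R" .
    moreover have "norm p \<le> R" if "p \<in> P" for p
      using R0 that R0p unfolding R_def using spos(1) s0(1)
      by (smt (verit) mult_nonneg_nonneg norm_ge_zero)
    ultimately show "insert (X n) P \<subseteq> cball 0 R" by auto
  qed
  have inD: "0 \<in> Delta2" "axis 1 1 \<in> Delta2" "axis 2 1 \<in> Delta2" unfolding Delta2_def by (auto intro: hull_inc)
  have Dn: "Mf n *v y + cf n \<in> cball 0 R" if "y \<in> Delta2" for n y
    using MC(3)[of n] Cb[of n] interior_subset that by blast
  have cfb: "cf n \<in> cball 0 R" for n using Dn[OF inD(1)] by simp
  have ent: "\<bar>Mf n $ i $ j\<bar> \<le> 2 * R" for n i j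
  proof -
    have "axis j 1 \<in> Delta2" using inD exhaust_2[of j] by auto
    then have "Mf n *v axis j 1 + cf n \<in> cball 0 R" by (rule Dn)
    then have "norm ((Mf n *v axis j 1 + cf n) - cf n) \<le> 2 * R" using cfb[of n]
      by (smt (verit) mem_cball_0 norm_triangle_ineq4)
    then have "norm (Mf n *v axis j 1) \<le> 2 * R" by simp
    then show ?thesis using component_le_norm_cart[of "Mf n *v axis j 1" i] mat_axis by (metis order_trans)
  qed
  define SR where "SR = {r::real. r \<in> \<int> \<and> \<bar>r\<bar> \<le> 2 * R}"
  have "range Mf \<subseteq> {M. \<forall>i j. M$i$j \<in> SR}" unfolding SR_def using MC(1) ent by auto
  moreover have "finite {M::real^2^2. \<forall>i j. M$i$j \<in> SR}" unfolding SR_def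
    by (rule fin_mats[OF finite_int_bounded])
  ultimately have "finite (range Mf)" by (rule finite_subset)
  then obtain n0 where inf: "infinite {n \<in> UNIV. Mf n = Mf n0}"
    using pigeonhole_infinite[of "UNIV :: nat set" Mf] by auto
  obtain r :: "nat \<Rightarrow> nat" where r0: "strict_mono r" "\<forall>n. r n \<in> {n \<in> UNIV. Mf n = Mf n0}"
    using infinite_enumerate[OF inf] by blast
  have r: "strict_mono r" "\<And>n. Mf (r n) = Mf n0" using r0 by auto
  have "seq_compact (cball (0::real^2) R)" by (simp add: compact_imp_seq_compact)
  then obtain c0 r2 where c0: "c0 \<in> cball 0 R" "strict_mono r2" "((\<lambda>n. cf (r n)) \<circ> r2) \<longlonglongrightarrow> c0"
    unfolding seq_compact_def using cfb by metis
  define sig where "sig = r \<circ> r2"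
  have sigm: "strict_mono sig" unfolding sig_def using r(1) c0(2) by (rule strict_mono_o)
  define M0 where "M0 = Mf n0"
  define t where "t n = cf (sig n) - c0" for n
  define sq where "sq n = s (sig n)" for n
  have Msig: "Mf (sig n) = M0" for n unfolding sig_def M0_def using r(2) by simp
  have "seqs P a b e e' M0 c0 t sq"
  proof (intro seqs.intro[OF fs_axioms] seqs_axioms.intro)
    show "0 < sq n" for n unfolding sq_def using spos by simp
    show "sq \<longlonglongrightarrow> 0" unfolding sq_def using LIMSEQ_subseq_LIMSEQ[OF slim sigm] by (simp add: o_def)
    show "goodpt P a b (midpoint e e' + sq n *\<^sub>R a)" for n unfolding sq_def using s0 spos by blast
    have "(\<lambda>n. cf (sig n)) \<longlonglongrightarrow> c0" using c0(3) unfolding sig_def by (simp add: o_def)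
    then have "(\<lambda>n. cf (sig n) - c0) \<longlonglongrightarrow> c0 - c0" by (intro tendsto_intros)
    then show "t \<longlonglongrightarrow> 0" unfolding t_def by simp
    show "y + t n \<in> interior (convex hull insert (midpoint e e' + sq n *\<^sub>R a) P)"
      if y: "y \<in> convex hull {c0, M0 *v axis 1 1 + c0, M0 *v axis 2 1 + c0}" for n y
    proof -
      have "y + t n \<in> (\<lambda>y. y + t n) ` ((\<lambda>y. M0 *v y + c0) ` Delta2)" using y img_hull by blast
      also have "\<dots> = (\<lambda>y. Mf (sig n) *v y + cf (sig n)) ` Delta2"
        unfolding copy_translate Msig t_def by simp
      also have "\<dots> \<subseteq> interior (convex hull (insert (X (sig n)) P))" by (rule MC(3))
      finally show ?thesis unfolding X_def sq_def .
    qed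
    show "\<not> (\<forall>v\<in>{c0, M0 *v axis 1 1 + c0, M0 *v axis 2 1 + c0}. v + u \<in> interior P)" for u
    proof
      assume all: "\<forall>v\<in>{c0, M0 *v axis 1 1 + c0, M0 *v axis 2 1 + c0}. v + u \<in> interior P"
      have "(\<lambda>y. M0 *v y + (c0 + u)) ` Delta2 = (\<lambda>y. y + u) ` ((\<lambda>y. M0 *v y + c0) ` Delta2)"
        by (rule copy_translate[symmetric])
      also have "\<dots> = convex hull ((\<lambda>y. y + u) ` {c0, M0 *v axis 1 1 + c0, M0 *v axis 2 1 + c0})"
        unfolding img_hull hull_transl ..
      also have "\<dots> \<subseteq> interior P" using all cvx by (intro hull_minimal) auto
      finally show False using fr0 MC(1,2) unfolding M0_def by blast
    qed
  qed
  then show ?thesis using MC(1,2) unfolding M0_def by blast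
qed

end

theorem proposition5p6:
  fixes P F :: "(real^2) set"
  assumes "polygon P" and "R_Delta2_free P" and "F facet_of P"
  shows "locked F P \<longleftrightarrow>
    (\<exists>D. R_unimodular_copy Delta2 D \<and> D \<subseteq> P \<and>
         F \<inter> D \<noteq> {} \<and> F \<inter> D \<subseteq> rel_interior F \<and>
         aff_dim (mink_diff P (convex hull {v. v extreme_point_of D \<and> v \<notin> F \<inter> D})) = 2)"
proof
  assume "\<exists>D. R_unimodular_copy Delta2 D \<and> D \<subseteq> P \<and>
         F \<inter> D \<noteq> {} \<and> F \<inter> D \<subseteq> rel_interior F \<and>
         aff_dim (mink_diff P (convex hull {v. v extreme_point_of D \<and> v \<notin> F \<inter> D})) = 2"
  then show "locked F P" using bwd[OF assms] by blast
next
  assume lk: "locked F P"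
  obtain a b e e' where ab: "a \<noteq> 0" "P \<subseteq> {y. a \<bullet> y \<le> b}" "F = P \<inter> {y. a \<bullet> y = b}"
    "F = closed_segment e e'" "e \<noteq> e'" "affine hull F = {y. a \<bullet> y = b}"
    using facet_setup[OF assms(1,3)] .
  have pi: "convex P" "compact P" "rel_interior P = interior P" using polygon_interior[OF assms(1)] by auto
  have pt: "polytope P" using assms(1) unfolding polygon_def by simp
  interpret fs P a b e e'
  proof
    show "convex P" "compact P" "a \<noteq> 0" "P \<subseteq> {y. a \<bullet> y \<le> b}" "e \<noteq> e'" by (fact | use pi ab in blast)+
    show "P \<inter> {y. a \<bullet> y = b} = closed_segment e e'" using ab by simp
    show "affine hull closed_segment e e' = {y. a \<bullet> y = b}" using ab by simp
    show "polyhedron P" using pt by (rule polytope_imp_polyhedron)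
  qed
  have fr: "\<not> ((\<lambda>y. M *v y + c) ` Delta2 \<subseteq> interior P)"
    if "\<forall>i j. M$i$j \<in> \<int>" "\<bar>det M\<bar> = 1" for M c
  proof -
    have "R_unimodular_copy Delta2 ((\<lambda>y. M *v y + c) ` Delta2)"
      unfolding R_unimodular_copy_def R_unimodular_map_def using that by blast
    then show ?thesis using assms(2) pi(3) unfolding R_Delta2_free_def by auto
  qed
  have lk2: "\<exists>M c. (\<forall>i j. M$i$j \<in> \<int>) \<and> \<bar>det M\<bar> = 1 \<and>
               (\<lambda>y. M *v y + c) ` Delta2 \<subseteq> interior (convex hull (insert x P))" if x: "a \<bullet> x > b" for x
  proof -
    have "interior P \<subseteq> {y. a \<bullet> y < b}" using interior_mono[OF ab(2)] ab(1) by simp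
    then have "beyond F P x" unfolding beyond_def using ab(1,6) x by blast
    then obtain D where "R_unimodular_copy Delta2 D" "D \<subseteq> interior (convex hull (insert x P))"
      using lk unfolding locked_def by blast
    then show ?thesis unfolding R_unimodular_copy_def R_unimodular_map_def by blast
  qed
  obtain M0 c0 t sq where M0: "\<forall>i j. M0$i$j \<in> \<int>" "\<bar>det M0\<bar> = 1" and sq: "seqs P a b e e' M0 c0 t sq"
    using extract_seq[OF fr lk2] by blast
  interpret sq: seqs P a b e e' M0 c0 t sq by (rule sq)
  obtain tau where tau:
    "(\<lambda>y. y + tau) ` sq.D0 \<subseteq> P" "closed_segment e e' \<inter> (\<lambda>y. y + tau) ` sq.D0 \<noteq> {}"
    "closed_segment e e' \<inter> (\<lambda>y. y + tau) ` sq.D0 \<subseteq> open_segment e e'"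
    "aff_dim (mink_diff P (convex hull {v. v extreme_point_of ((\<lambda>y. y + tau) ` sq.D0) \<and>
        v \<notin> closed_segment e e' \<inter> (\<lambda>y. y + tau) ` sq.D0})) = 2"
    using sq.construct by blast
  define D where "D = (\<lambda>y. M0 *v y + (c0 + tau)) ` Delta2"
  have DD: "D = (\<lambda>y. y + tau) ` sq.D0" unfolding D_def copy_translate[symmetric] img_hull ..
  have cp: "R_unimodular_copy Delta2 D"
    unfolding R_unimodular_copy_def R_unimodular_map_def D_def using M0 by blast
  have rF: "rel_interior F = open_segment e e'" using ab(4,5) by (simp add: rel_interior_closed_segment)
  show "\<exists>D. R_unimodular_copy Delta2 D \<and> D \<subseteq> P \<and>
         F \<inter> D \<noteq> {} \<and> F \<inter> D \<subseteq> rel_interior F \<and>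
         aff_dim (mink_diff P (convex hull {v. v extreme_point_of D \<and> v \<notin> F \<inter> D})) = 2"
  proof (intro exI[of _ D] conjI)
    show "R_unimodular_copy Delta2 D" by (rule cp)
    show "D \<subseteq> P" unfolding DD by (rule tau(1))
    show "F \<inter> D \<noteq> {}" unfolding DD ab(4) by (rule tau(2))
    show "F \<inter> D \<subseteq> rel_interior F" unfolding rF unfolding DD ab(4) by (rule tau(3))
    show "aff_dim (mink_diff P (convex hull {v. v extreme_point_of D \<and> v \<notin> F \<inter> D})) = 2"
      unfolding DD ab(4) by (rule tau(4))
  qed
qed



end
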